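(* Let $\beta_1>\beta_0>0$, $n\ge2$ and $\varepsilon>0$. Then there exist $C,\alpha>0$ such that for all $t\ge0$ each of the probabilities $\mathbb{P}_{\mathbf 0}(\tilde X^n_t(n)\ge(n\beta_0+\varepsilon)t)$, $\mathbb{P}_{\mathbf 0}\big(\tilde X^n_t(n)\ge(\frac{(n-1)\beta_1+\beta_0}{n}+\varepsilon)t\big)$ and $\mathbb{P}_{\mathbf 0}(\tilde X^n_t(n)\ge(4\sqrt2\sqrt{\beta_1\beta_0}+\varepsilon)t)$ is at most $Ce^{-\alpha t}$. In particular $\tilde d_n(\beta_1)\le\min\big(n\beta_0,\frac{(n-1)\beta_1+\beta_0}{n},4\sqrt2\sqrt{\beta_1\beta_0}\big)$.
   Context: For $m\ge1$: for $x\in\mathbb{N}^m$, with zero boundary convention $x(0)=x(m+1)=0$, let $V_j(x)=\mathbf 1_{\{x(j-1)>x(j)\}}+\mathbf 1_{\{x(j+1)>x(j)\}}\in\{0,1,2\}$. $\tilde X^m$ denotes the continuous-time Markov chain on $\mathbb{N}^m$ jumping from $x$ to $x+e_j$ at rate $\tilde\beta_{V_j(x)}$ where $(\tilde\beta_0,\tilde\beta_1,\tilde\beta_2)=(\beta_0,\beta_1,\beta_1)$, with no other transitions; $\mathbb{P}_{\mathbf 0}$ is its law from the zero configuration. $\tilde d_m(\beta_1)=\inf\{d>0:\ \exists C,\alpha>0,\ \forall t\ge0,\ \mathbb{P}_{\mathbf 0}(\tilde X^m_t(m)\ge dt)\le Ce^{-\alpha t}\}$. *)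

theory Defs
  imports "HOL-Probability.Probability"
begin

text \<open>Configurations x in N^m are functions nat => nat, sites 1..m; the zero boundary
 convention x(0) = x(m+1) = 0 is built into V.\<close>

definition V :: "nat \<Rightarrow> (nat \<Rightarrow> nat) \<Rightarrow> nat \<Rightarrow> nat" where
  "V m x j = (if (if j = 1 then 0 else x (j - 1)) > x j then 1 else 0)
           + (if (if j = m then 0 else x (j + 1)) > x j then 1 else 0)"

text \<open>Jump rate at site j: beta~_{V_j(x)} with (beta~_0, beta~_1, beta~_2) = (beta0, beta1, beta1).\<close>
definition rate :: "real \<Rightarrow> real \<Rightarrow> nat \<Rightarrow> (nat \<Rightarrow> nat) \<Rightarrow> nat \<Rightarrow> real" where
  "rate b0 b1 m x j = (if V m x j = 0 then b0 else b1)"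

definition unif_rate :: "real \<Rightarrow> real \<Rightarrow> nat \<Rightarrow> real" where
  "unif_rate b0 b1 m = real m * max b0 b1"

text \<open>One step of the uniformized jump chain: choose a site j uniformly in {1..m},
  then jump x -> x + e_j with probability rate_j / max b0 b1 (so overall jump
  probability rate_j / Lambda), otherwise stay.\<close>
definition step :: "real \<Rightarrow> real \<Rightarrow> nat \<Rightarrow> (nat \<Rightarrow> nat) \<Rightarrow> (nat \<Rightarrow> nat) pmf" where
  "step b0 b1 m x =
     bind_pmf (pmf_of_set {1..m}) (\<lambda>j.
       bind_pmf (bernoulli_pmf (rate b0 b1 m x j / max b0 b1)) (\<lambda>b.
         return_pmf (if b then x(j := Suc (x j)) else x)))"

definition jump_chain :: "real \<Rightarrow> real \<Rightarrow> nat \<Rightarrow> nat \<Rightarrow> (nat \<Rightarrow> nat) pmf" where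
  "jump_chain b0 b1 m k = ((\<lambda>p. bind_pmf p (step b0 b1 m)) ^^ k) (return_pmf (\<lambda>_. 0))"

text \<open>P_0(X~^m_t \<in> A) for the continuous-time chain, via uniformization
  (Poisson(Lambda t) number of clock rings).\<close>
definition ctmc_prob :: "real \<Rightarrow> real \<Rightarrow> nat \<Rightarrow> real \<Rightarrow> (nat \<Rightarrow> nat) set \<Rightarrow> real" where
  "ctmc_prob b0 b1 m t A =
     (\<Sum>k. exp (- unif_rate b0 b1 m * t) * (unif_rate b0 b1 m * t) ^ k / fact k
           * measure_pmf.prob (jump_chain b0 b1 m k) A)"

definition tail_prob :: "real \<Rightarrow> real \<Rightarrow> nat \<Rightarrow> real \<Rightarrow> real \<Rightarrow> real" where
  "tail_prob b0 b1 m t d = ctmc_prob b0 b1 m t {x. real (x m) \<ge> d * t}"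

definition d_tilde :: "real \<Rightarrow> real \<Rightarrow> nat \<Rightarrow> real" where
  "d_tilde b0 b1 m = Inf {d. d > 0 \<and> (\<exists>C \<alpha>. C > 0 \<and> \<alpha> > 0 \<and>
       (\<forall>t\<ge>0. tail_prob b0 b1 m t d \<le> C * exp (- \<alpha> * t)))}"

end

theory Submission
  imports Defs
begin


lemma rate_cases: "rate b0 b1 n x j = b0 \<or> rate b0 b1 n x j = b1"
  by (simp add: rate_def)

lemma step_nn:
  assumes b: "0<b0" "b0<b1" and n: "1\<le>n" and Fnn: "\<And>y. 0 \<le> F y"
  shows "(\<integral>\<^sup>+y. ennreal (F y) \<partial>step b0 b1 n x) =
     ennreal (F x + (\<Sum>j\<in>{1..n}. rate b0 b1 n x j * (F (x(j:=Suc(x j))) - F x)) / (real n * b1))"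
proof -
  have mx: "max b0 b1 = b1" using b by simp
  define p where "p j = rate b0 b1 n x j / b1" for j
  have p01: "0 \<le> p j" "p j \<le> 1" for j using rate_cases[of b0 b1 n x j] b by (auto simp: p_def)
  have inner: "(\<integral>\<^sup>+bb. ennreal (F (if bb then x(j := Suc (x j)) else x)) \<partial>bernoulli_pmf (p j))
      = ennreal (p j * F (x(j := Suc (x j))) + (1 - p j) * F x)" for j
  proof -
    have "(\<integral>\<^sup>+bb. ennreal (F (if bb then x(j := Suc (x j)) else x)) \<partial>bernoulli_pmf (p j))
        = ennreal (F (x(j := Suc (x j)))) * ennreal (p j) + ennreal (F x) * ennreal (1 - p j)"
      using p01[of j] by (subst nn_integral_bernoulli_pmf) auto
    also have "\<dots> = ennreal (p j * F (x(j := Suc (x j))) + (1 - p j) * F x)"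
      using p01[of j] Fnn[of x] Fnn[of "x(j := Suc (x j))"]
      by (simp add: ennreal_plus ennreal_mult mult.commute)
    finally show ?thesis .
  qed
  have fin: "finite {1..n}" "{1..n} \<noteq> {}" using n by auto
  have "(\<integral>\<^sup>+y. ennreal (F y) \<partial>step b0 b1 n x) =
     (\<Sum>j\<in>{1..n}. ennreal (p j * F (x(j := Suc (x j))) + (1 - p j) * F x)) / card {1..n}"
    unfolding step_def mx p_def[symmetric]
    using n by (simp add: inner nn_integral_pmf_of_set)
  also have "\<dots> = ennreal ((\<Sum>j\<in>{1..n}. p j * F (x(j := Suc (x j))) + (1 - p j) * F x) / real n)"
  proof -
    have p1: "0 \<le> 1 - p j" for j using p01[of j] by simp
    have tn: "0 \<le> p j * F (x(j := Suc (x j))) + (1 - p j) * F x" for j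
      using p01[of j] p1[of j] Fnn[of x] Fnn[of "x(j := Suc (x j))"] by simp
    have sn: "0 \<le> (\<Sum>j\<in>{1..n}. p j * F (x(j := Suc (x j))) + (1 - p j) * F x)"
      by (intro sum_nonneg tn)
    have "(\<Sum>j\<in>{1..n}. ennreal (p j * F (x(j := Suc (x j))) + (1 - p j) * F x))
        = ennreal (\<Sum>j\<in>{1..n}. p j * F (x(j := Suc (x j))) + (1 - p j) * F x)"
      by (rule sum_ennreal) (rule tn)
    moreover have "(of_nat (card {1..n}) :: ennreal) = ennreal (real n)"
      by (simp add: ennreal_of_nat_eq_real_of_nat)
    ultimately have "(\<Sum>j\<in>{1..n}. ennreal (p j * F (x(j := Suc (x j))) + (1 - p j) * F x)) / card {1..n}
        = ennreal (\<Sum>j\<in>{1..n}. p j * F (x(j := Suc (x j))) + (1 - p j) * F x) / ennreal (real n)"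
      by simp
    also have "\<dots> = ennreal ((\<Sum>j\<in>{1..n}. p j * F (x(j := Suc (x j))) + (1 - p j) * F x) / real n)"
      using sn n by (intro divide_ennreal) auto
    finally show ?thesis .
  qed
  also have "(\<Sum>j\<in>{1..n}. p j * F (x(j := Suc (x j))) + (1 - p j) * F x) / real n
     = F x + (\<Sum>j\<in>{1..n}. rate b0 b1 n x j * (F (x(j:=Suc(x j))) - F x)) / (real n * b1)"
  proof -
    have "(\<Sum>j\<in>{1..n}. p j * F (x(j := Suc (x j))) + (1 - p j) * F x)
        = (\<Sum>j\<in>{1..n}. F x + (rate b0 b1 n x j * (F (x(j:=Suc(x j))) - F x)) / b1)"
      using b by (intro sum.cong) (auto simp: p_def field_simps)
    also have "\<dots> = real n * F x + (\<Sum>j\<in>{1..n}. rate b0 b1 n x j * (F (x(j:=Suc(x j))) - F x)) / b1"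
      by (simp add: sum.distrib sum_divide_distrib)
    finally show ?thesis using n b by (simp add: field_simps)
  qed
  finally show ?thesis .
qed


lemma jc_Suc: "jump_chain b0 b1 n (Suc k) = bind_pmf (jump_chain b0 b1 n k) (step b0 b1 n)"
  by (simp add: jump_chain_def)

lemma jc_0: "jump_chain b0 b1 n 0 = return_pmf (\<lambda>_. 0)"
  by (simp add: jump_chain_def)

lemma generic_tail:
  assumes b: "0<b0" "b0<b1" and n: "1\<le>n" and Fnn: "\<And>y. 0 \<le> F y"
  and drift: "\<And>x. (\<Sum>j\<in>{1..n}. rate b0 b1 n x j * (F (x(j:=Suc(x j))) - F x)) \<le> lam * F x"
  and lam: "0 \<le> lam" and Fge: "\<And>x. exp (th * real (x n)) \<le> F x" and th: "0 \<le> th"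
  and t: "0 \<le> t"
  shows "tail_prob b0 b1 n t d \<le> F (\<lambda>_. 0) * exp ((lam - th*d) * t)"
proof -
  define Lam where "Lam = real n * b1"
  have Lam: "0 < Lam" using n b by (simp add: Lam_def)
  define q where "q = 1 + lam / Lam"
  have q: "0 \<le> q" using lam Lam by (simp add: q_def)
  define F0 where "F0 = F (\<lambda>_. 0)"
  have F0: "0 \<le> F0" using Fnn by (simp add: F0_def)
  have one: "(\<integral>\<^sup>+y. ennreal (F y) \<partial>step b0 b1 n x) \<le> ennreal (q * F x)" for x
  proof -
    have "(\<Sum>j\<in>{1..n}. rate b0 b1 n x j * (F (x(j:=Suc(x j))) - F x)) / Lam \<le> lam * F x / Lam"
      using drift[of x] Lam by (simp add: divide_right_mono)
    then show ?thesis unfolding step_nn[OF b n Fnn] Lam_def[symmetric]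
      by (intro ennreal_leI) (simp add: q_def field_simps)
  qed
  have Q: "(\<integral>\<^sup>+y. ennreal (F y) \<partial>jump_chain b0 b1 n k) \<le> ennreal (F0 * q ^ k)" for k
  proof (induction k)
    case 0
    then show ?case using Fnn by (simp add: jc_0 F0_def)
  next
    case (Suc k)
    have "(\<integral>\<^sup>+y. ennreal (F y) \<partial>jump_chain b0 b1 n (Suc k))
        = (\<integral>\<^sup>+x. (\<integral>\<^sup>+y. ennreal (F y) \<partial>step b0 b1 n x) \<partial>jump_chain b0 b1 n k)"
      by (simp add: jc_Suc)
    also have "\<dots> \<le> (\<integral>\<^sup>+x. ennreal q * ennreal (F x) \<partial>jump_chain b0 b1 n k)"
      by (intro nn_integral_mono) (use one q Fnn in \<open>simp add: ennreal_mult\<close>)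
    also have "\<dots> = ennreal q * (\<integral>\<^sup>+x. ennreal (F x) \<partial>jump_chain b0 b1 n k)"
      by (simp add: nn_integral_cmult)
    also have "\<dots> \<le> ennreal q * ennreal (F0 * q ^ k)"
      by (intro mult_left_mono Suc.IH) simp
    also have "\<dots> = ennreal (F0 * q ^ Suc k)"
      using q F0 by (simp add: ennreal_mult[symmetric] mult_ac)
    finally show ?case .
  qed
  define A where "A = {x::nat\<Rightarrow>nat. d * t \<le> real (x n)}"
  define c where "c = exp (- (th * d * t))"
  have c: "0 < c" by (simp add: c_def)
  have P: "measure_pmf.prob (jump_chain b0 b1 n k) A \<le> c * (F0 * q ^ k)" for k
  proof -
    have "emeasure (measure_pmf (jump_chain b0 b1 n k)) A = (\<integral>\<^sup>+x. indicator A x \<partial>jump_chain b0 b1 n k)"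
      by simp
    also have "\<dots> \<le> (\<integral>\<^sup>+x. ennreal c * ennreal (F x) \<partial>jump_chain b0 b1 n k)"
    proof (intro nn_integral_mono)
      fix x
      show "indicator A x \<le> ennreal c * ennreal (F x)"
      proof (cases "x \<in> A")
        case True
        then have "th * (d * t) \<le> th * real (x n)" using th by (simp add: A_def mult_left_mono)
        then have "exp (th * d * t) \<le> F x" using Fge[of x] by (simp add: mult.assoc) (meson exp_le_cancel_iff order_trans)
        then have "1 \<le> c * F x" unfolding c_def by (simp add: exp_minus field_simps)
        then show ?thesis using True c Fnn[of x] by (simp add: ennreal_mult[symmetric] ennreal_leI)
      qed simp
    qed
    also have "\<dots> = ennreal c * (\<integral>\<^sup>+x. ennreal (F x) \<partial>jump_chain b0 b1 n k)"
      by (simp add: nn_integral_cmult)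
    also have "\<dots> \<le> ennreal c * ennreal (F0 * q ^ k)"
      by (intro mult_left_mono Q) simp
    also have "\<dots> = ennreal (c * (F0 * q ^ k))"
      using c q F0 by (simp add: ennreal_mult[symmetric])
    finally show ?thesis
      using c q F0 by (simp add: measure_pmf.emeasure_eq_measure ennreal_le_iff)
  qed
  define g where "g k = c * F0 * exp (- Lam * t) * (((Lam + lam) * t) ^ k / fact k)" for k
  have gs: "g sums (c * F0 * exp (- Lam * t) * exp ((Lam + lam) * t))"
    unfolding g_def
    by (intro sums_mult) (use exp_converges[of "(Lam + lam) * t"] in \<open>simp add: scaleR_conv_of_real divide_inverse mult.commute\<close>)
  define a where "a k = exp (- unif_rate b0 b1 n * t) * (unif_rate b0 b1 n * t) ^ k / fact k
           * measure_pmf.prob (jump_chain b0 b1 n k) A" for k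
  have ur: "unif_rate b0 b1 n = Lam" using b by (simp add: unif_rate_def Lam_def)
  have ag: "a k \<le> g k" for k
  proof -
    have e0: "0 \<le> exp (- Lam * t) * (Lam * t) ^ k / fact k"
      using Lam t by simp
    have "a k \<le> exp (- Lam * t) * (Lam * t) ^ k / fact k * (c * (F0 * q ^ k))"
      unfolding a_def ur by (rule mult_left_mono[OF P e0])
    also have "\<dots> = g k"
    proof -
      have lq: "Lam * t * q = (Lam + lam) * t"
        using Lam by (simp add: q_def field_simps)
      have eq: "(Lam * t) ^ k * q ^ k = ((Lam + lam) * t) ^ k"
        by (simp only: power_mult_distrib[symmetric] lq)
      have "exp (- Lam * t) * (Lam * t) ^ k / fact k * (c * (F0 * q ^ k))
          = c * F0 * exp (- Lam * t) * (((Lam * t) ^ k * q ^ k) / fact k)"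
        by (simp add: field_simps)
      then show ?thesis by (simp only: eq g_def)
    qed
    finally show ?thesis .
  qed
  have a0: "0 \<le> a k" for k using Lam t unfolding a_def ur by auto
  have sa: "summable a"
    by (rule summable_comparison_test[OF _ sums_summable[OF gs]]) (use a0 ag in auto)
  have "tail_prob b0 b1 n t d = suminf a"
    unfolding tail_prob_def ctmc_prob_def a_def[abs_def] A_def by (rule refl)
  also have "\<dots> \<le> suminf g"
    by (rule suminf_le[OF ag sa sums_summable[OF gs]])
  also have "\<dots> = c * F0 * exp (- Lam * t) * exp ((Lam + lam) * t)"
    using gs by (simp add: sums_iff)
  also have "\<dots> = F0 * exp ((lam - th*d) * t)"
  proof -
    have "c * exp (- Lam * t) * exp ((Lam + lam) * t) = exp (- (th * d * t) + - Lam * t + (Lam + lam) * t)"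
      unfolding c_def mult_exp_exp by (simp add: algebra_simps)
    also have "\<dots> = exp ((lam - th*d) * t)" by (simp add: algebra_simps)
    finally show ?thesis by (simp add: mult_ac)
  qed
  finally show ?thesis by (simp add: F0_def)
qed



lemma rate_max:
  assumes j: "j \<in> {1..n}" and xm: "x j = Max (x ` {1..n})"
  shows "rate b0 b1 n x j = b0"
proof -
  have le: "x i \<le> x j" if "i \<in> {1..n}" for i
    using that xm by (simp add: Max_ge)
  have jm: "j - 1 \<in> {1..n}" if "j \<noteq> 1" using j that by auto
  have l: "\<not> (if j = 1 then 0 else x (j - 1)) > x j"
    using le[OF jm] by auto
  have r: "\<not> (if j = n then 0 else x (j + 1)) > x j"
    using le[of "j+1"] j by auto
  show ?thesis using l r by (simp add: rate_def V_def)
qed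

lemma sum_upd:
  fixes g :: "nat \<Rightarrow> real"
  assumes "finite S" "j \<in> S"
  shows "(\<Sum>i\<in>S. g ((x(j:=v)) i)) = (\<Sum>i\<in>S. g (x i)) + (g v - g (x j))"
proof -
  have A: "(\<Sum>i\<in>S. g ((x(j:=v)) i)) = g ((x(j:=v)) j) + (\<Sum>i\<in>S-{j}. g ((x(j:=v)) i))"
    using assms by (rule sum.remove)
  have B: "(\<Sum>i\<in>S-{j}. g ((x(j:=v)) i)) = (\<Sum>i\<in>S-{j}. g (x i))"
    by (intro sum.cong) auto
  have C: "(\<Sum>i\<in>S. g (x i)) = g (x j) + (\<Sum>i\<in>S-{j}. g (x i))"
    using assms by (rule sum.remove)
  have D: "g ((x(j:=v)) j) = g v" by simp
  show ?thesis using A B C D by linarith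
qed

lemma small_th:
  fixes c e :: real
  assumes "0 < c" "0 < e"
  shows "\<exists>th>0. c * (exp th - 1) < th * (c + e)"
proof -
  define th where "th = min 1 (e / (2 * c))"
  have th: "0 < th" "th \<le> 1" "th \<le> e / (2*c)" using assms by (auto simp: th_def)
  have "exp th \<le> 1 + th + th^2" using exp_bound[of th] th by simp
  then have "c * (exp th - 1) \<le> c * (th + th^2)" using assms by simp
  also have "c * th \<le> e / 2" using th assms by (simp add: field_simps)
  then have "c * (th + th^2) \<le> th * (c + e/2)"
    using th assms by (simp add: power2_eq_square algebra_simps mult_left_mono)
  also have "\<dots> < th * (c + e)" using th assms by simp
  finally show ?thesis using th by blast
qed



lemma tail1:
  assumes b: "0<b0" "b0<b1" and n: "1\<le>n" and e: "0 < e"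
  shows "\<exists>al>0. \<forall>t\<ge>0. tail_prob b0 b1 n t (real n * b0 + e) \<le> 1 * exp (- al * t)"
proof -
  obtain th where th: "th > 0" "real n * b0 * (exp th - 1) < th * (real n * b0 + e)"
    using small_th[of "real n * b0" e] b n e by auto
  define F where "F x = exp (th * real (Max (x ` {1..n})))" for x :: "nat \<Rightarrow> nat"
  define lam where "lam = real n * b0 * (exp th - 1)"
  have fin: "finite {1..n}" "{1..n} \<noteq> {}" using n by auto
  have lam0: "0 \<le> lam" using th b by (simp add: lam_def)
  have drift: "(\<Sum>j\<in>{1..n}. rate b0 b1 n x j * (F (x(j:=Suc(x j))) - F x)) \<le> lam * F x" for x
  proof -
    define M where "M = Max (x ` {1..n})"
    have FM: "F x = exp (th * real M)" by (simp add: F_def M_def)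
    have xle: "x i \<le> M" if "i \<in> {1..n}" for i using that fin by (simp add: M_def)
    have each: "rate b0 b1 n x j * (F (x(j:=Suc(x j))) - F x) \<le> b0 * ((exp th - 1) * F x)"
      if j: "j \<in> {1..n}" for j
    proof (cases "x j = M")
      case True
      have "\<forall>y\<in>(x(j:=Suc(x j))) ` {1..n}. y \<le> Suc M"
      proof
        fix y assume "y \<in> (x(j:=Suc(x j))) ` {1..n}"
        then obtain i where i: "i \<in> {1..n}" "y = (x(j:=Suc(x j))) i" by blast
        show "y \<le> Suc M" using xle[OF i(1)] True i(2) by (cases "i = j") auto
      qed
      then have "Max ((x(j:=Suc(x j))) ` {1..n}) \<le> Suc M"
        using fin by (subst Max_le_iff) auto
      then have "F (x(j:=Suc(x j))) \<le> exp (th * real (Suc M))"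
        using th unfolding F_def by simp
      also have "\<dots> = exp th * F x" unfolding FM of_nat_Suc distrib_left mult_1_right exp_add by simp
      finally have d: "F (x(j:=Suc(x j))) - F x \<le> (exp th - 1) * F x" by (simp add: algebra_simps)
      have "rate b0 b1 n x j = b0" using rate_max[OF j] True by (simp add: M_def)
      then show ?thesis using b mult_left_mono[OF d, of b0] by simp
    next
      case False
      then have lt: "x j < M" using xle[OF j] by simp
      have "\<forall>y\<in>(x(j:=Suc(x j))) ` {1..n}. y \<le> M"
      proof
        fix y assume "y \<in> (x(j:=Suc(x j))) ` {1..n}"
        then obtain i where i: "i \<in> {1..n}" "y = (x(j:=Suc(x j))) i" by blast
        show "y \<le> M" using xle[OF i(1)] lt i(2) by (cases "i = j") auto
      qed
      then have "Max ((x(j:=Suc(x j))) ` {1..n}) \<le> M"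
        using fin by (subst Max_le_iff) auto
      then have "F (x(j:=Suc(x j))) \<le> F x"
        using th unfolding FM unfolding F_def by simp
      moreover have "0 \<le> rate b0 b1 n x j" using b by (simp add: rate_def)
      ultimately have "rate b0 b1 n x j * (F (x(j:=Suc(x j))) - F x) \<le> 0"
        by (simp add: mult_nonneg_nonpos)
      also have "0 \<le> b0 * ((exp th - 1) * F x)" using b th by (simp add: F_def)
      finally show ?thesis .
    qed
    have "(\<Sum>j\<in>{1..n}. rate b0 b1 n x j * (F (x(j:=Suc(x j))) - F x)) \<le> (\<Sum>j\<in>{1..n}. b0 * ((exp th - 1) * F x))"
      by (rule sum_mono) (rule each)
    also have "\<dots> = lam * F x" by (simp add: lam_def)
    finally show ?thesis .
  qed
  have Fge: "exp (th * real (x n)) \<le> F x" for x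
  proof -
    have "x n \<le> Max (x ` {1..n})" using fin n by (intro Max_ge) auto
    then show ?thesis using th unfolding F_def by simp
  qed
  have Fnn: "0 \<le> F y" for y by (simp add: F_def)
  have F0: "F (\<lambda>_. 0) = 1"
  proof -
    have "(\<lambda>_::nat. 0::nat) ` {1..n} = {0}" using fin by auto
    then show ?thesis unfolding F_def by simp
  qed
  define al where "al = th * (real n * b0 + e) - lam"
  have al: "al > 0" using th unfolding al_def lam_def by linarith
  have "tail_prob b0 b1 n t (real n * b0 + e) \<le> 1 * exp (- al * t)" if t: "0 \<le> t" for t
  proof -
    have "tail_prob b0 b1 n t (real n * b0 + e) \<le> F (\<lambda>_. 0) * exp ((lam - th*(real n * b0 + e)) * t)"
      by (rule generic_tail[OF b n Fnn drift lam0 Fge less_imp_le[OF th(1)] t])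
    also have "(lam - th*(real n * b0 + e)) = - al" by (simp add: al_def)
    finally show ?thesis by (simp add: F0)
  qed
  then show ?thesis using al by blast
qed



lemma tail2:
  assumes b: "0<b0" "b0<b1" and n: "1\<le>n" and e: "0 < e"
  shows "\<exists>al>0. \<forall>t\<ge>0. tail_prob b0 b1 n t ((real (n - 1) * b1 + b0) / real n + e) \<le> real n * exp (- al * t)"
proof -
  define c where "c = (real (n - 1) * b1 + b0) / real n"
  have nr: "real (n - 1) = real n - 1" using n by (simp add: of_nat_diff)
  have c0: "0 < c" using b n unfolding c_def by (intro divide_pos_pos add_nonneg_pos) auto
  have c_alt: "c = b1 - (b1 - b0) / real n" using n unfolding c_def nr by (simp add: field_simps)
  obtain th where th: "th > 0" "c * (exp th - 1) < th * (c + e)"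
    using small_th[OF c0 e] by auto
  define g where "g k = exp (th * real k)" for k :: nat
  define F where "F x = (\<Sum>i\<in>{1..n}. g (x i))" for x :: "nat \<Rightarrow> nat"
  define lam where "lam = c * (exp th - 1)"
  have fin: "finite {1..n}" "{1..n} \<noteq> {}" using n by auto
  have eth: "0 \<le> exp th - 1" using th by simp
  have lam0: "0 \<le> lam" using c0 eth by (simp add: lam_def)
  have drift: "(\<Sum>j\<in>{1..n}. rate b0 b1 n x j * (F (x(j:=Suc(x j))) - F x)) \<le> lam * F x" for x
  proof -
    have dF: "F (x(j:=Suc(x j))) - F x = (exp th - 1) * g (x j)" if "j \<in> {1..n}" for j
    proof -
      have "F (x(j:=Suc(x j))) = F x + (g (Suc (x j)) - g (x j))"
        unfolding F_def by (rule sum_upd[OF fin(1) that])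
      moreover have "g (Suc (x j)) = exp th * g (x j)"
        unfolding g_def of_nat_Suc distrib_left mult_1_right exp_add by simp
      ultimately show ?thesis by (simp add: algebra_simps)
    qed
    have "(\<Sum>j\<in>{1..n}. rate b0 b1 n x j * (F (x(j:=Suc(x j))) - F x))
        = (\<Sum>j\<in>{1..n}. (exp th - 1) * (rate b0 b1 n x j * g (x j)))"
      by (intro sum.cong refl) (simp add: dF)
    also have "\<dots> = (exp th - 1) * (\<Sum>j\<in>{1..n}. rate b0 b1 n x j * g (x j))"
      by (simp add: sum_distrib_left)
    also have "(\<Sum>j\<in>{1..n}. rate b0 b1 n x j * g (x j)) \<le> c * F x"
    proof -
      have "Max (x ` {1..n}) \<in> x ` {1..n}" using fin by (intro Max_in) auto
      then obtain m where m: "m \<in> {1..n}" "x m = Max (x ` {1..n})" by (metis imageE)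
      have rm: "rate b0 b1 n x m = b0" by (rule rate_max[OF m])
      have gle: "g (x j) \<le> g (x m)" if "j \<in> {1..n}" for j
      proof -
        have "x j \<le> x m" using that fin m(2) by simp
        then show ?thesis using th unfolding g_def by simp
      qed
      have W: "F x \<le> real n * g (x m)"
        unfolding F_def using sum_bounded_above[of "{1..n}" "\<lambda>j. g (x j)" "g (x m)"] gle by simp
      have rle: "rate b0 b1 n x j \<le> b1" for j using b by (simp add: rate_def)
      have "(\<Sum>j\<in>{1..n}. rate b0 b1 n x j * g (x j))
          = rate b0 b1 n x m * g (x m) + (\<Sum>j\<in>{1..n}-{m}. rate b0 b1 n x j * g (x j))"
        using fin m by (simp add: sum.remove)
      also have "(\<Sum>j\<in>{1..n}-{m}. rate b0 b1 n x j * g (x j)) \<le> (\<Sum>j\<in>{1..n}-{m}. b1 * g (x j))"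
        by (intro sum_mono mult_right_mono rle) (simp add: g_def)
      also have "(\<Sum>j\<in>{1..n}-{m}. b1 * g (x j)) = b1 * (F x - g (x m))"
        using fin m unfolding F_def by (simp add: sum.remove sum_distrib_left)
      finally have "(\<Sum>j\<in>{1..n}. rate b0 b1 n x j * g (x j)) \<le> b1 * F x - (b1 - b0) * g (x m)"
        using rm by (simp add: algebra_simps)
      also have "(b1 - b0) * (F x / real n) \<le> (b1 - b0) * g (x m)"
        using W n b by (intro mult_left_mono) (auto simp: field_simps)
      then have "b1 * F x - (b1 - b0) * g (x m) \<le> b1 * F x - (b1 - b0) * (F x / real n)" by simp
      also have "\<dots> = c * F x" unfolding c_alt by (simp add: algebra_simps)
      finally show ?thesis .
    qed
    then have "(exp th - 1) * (\<Sum>j\<in>{1..n}. rate b0 b1 n x j * g (x j)) \<le> (exp th - 1) * (c * F x)"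
      using eth by (rule mult_left_mono)
    also have "\<dots> = lam * F x" by (simp add: lam_def)
    finally show ?thesis .
  qed
  have Fge: "exp (th * real (x n)) \<le> F x" for x
  proof -
    have "g (x n) \<le> F x" unfolding F_def using fin n by (intro member_le_sum) (auto simp: g_def)
    then show ?thesis by (simp add: g_def)
  qed
  have Fnn: "0 \<le> F y" for y unfolding F_def g_def by (intro sum_nonneg) simp
  have F0: "F (\<lambda>_. 0) = real n" by (simp add: F_def g_def)
  define al where "al = th * (c + e) - lam"
  have al: "al > 0" using th unfolding al_def lam_def by linarith
  have "tail_prob b0 b1 n t (c + e) \<le> real n * exp (- al * t)" if t: "0 \<le> t" for t
  proof -
    have "tail_prob b0 b1 n t (c + e) \<le> F (\<lambda>_. 0) * exp ((lam - th*(c + e)) * t)"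
      by (rule generic_tail[OF b n Fnn drift lam0 Fge less_imp_le[OF th(1)] t])
    also have "(lam - th*(c + e)) = - al" by (simp add: al_def)
    finally show ?thesis by (simp add: F0)
  qed
  then show ?thesis using al unfolding c_def by blast
qed



lemma pw_diff:
  fixes k l :: nat
  shows "\<bar>2 * 2^k - 2^l\<bar> - \<bar>2^k - 2^l\<bar> \<le> (2::real)^k"
    and "k < l \<Longrightarrow> \<bar>2 * 2^k - 2^l\<bar> - \<bar>2^k - 2^l\<bar> = - ((2::real)^k)"
    and "k < l \<Longrightarrow> (2::real)^k \<le> \<bar>2^k - 2^l\<bar>"
proof -
  have A: "k < l \<Longrightarrow> 2 * (2::real)^k \<le> 2^l"
  proof -
    assume "k < l"
    then have "Suc k \<le> l" by simp
    then have "(2::real)^(Suc k) \<le> 2^l" by (rule power_increasing) simp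
    then show ?thesis by simp
  qed
  have B: "\<not> k < l \<Longrightarrow> (2::real)^l \<le> 2^k"
    by (rule power_increasing) auto
  have p: "(0::real) < 2^k" by simp
  show "\<bar>2 * 2^k - 2^l\<bar> - \<bar>2^k - 2^l\<bar> \<le> (2::real)^k"
  proof (cases "k < l")
    case True
    then show ?thesis using A p by auto
  next
    case False
    then have "(2::real)^l \<le> 2^k" by (rule B)
    then have h1: "0 \<le> 2 * 2^k - (2::real)^l" "0 \<le> (2::real)^k - 2^l" using p by linarith+
    show ?thesis unfolding abs_of_nonneg[OF h1(1)] abs_of_nonneg[OF h1(2)] by simp
  qed
  show "k < l \<Longrightarrow> \<bar>2 * 2^k - 2^l\<bar> - \<bar>2^k - 2^l\<bar> = - ((2::real)^k)"
    using A p by auto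
  show "k < l \<Longrightarrow> (2::real)^k \<le> \<bar>2^k - 2^l\<bar>"
    using A p by auto
qed

lemma ln2_ge: "1/2 \<le> ln (2::real)"
proof -
  have "exp (1/2::real) \<le> 1 + 1/2 + (1/2)^2" by (rule exp_bound) auto
  then have "exp (1/2::real) \<le> 2" by (simp add: power2_eq_square)
  then show ?thesis by (subst ln_ge_iff) auto
qed

lemma tail3:
  assumes b: "0<b0" "b0<b1" and n: "1\<le>n" and e: "0 < e"
  shows "\<exists>al>0. \<forall>t\<ge>0. tail_prob b0 b1 n t (4 * sqrt 2 * sqrt (b1 * b0) + e) \<le> real n * exp (- al * t)"
proof -
  define s where "s = sqrt (b0 * b1)"
  have s0: "0 < s" using b by (simp add: s_def)
  have ss: "s * s = b0 * b1" using b by (simp add: s_def)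
  have b0s: "b0 \<le> s" unfolding s_def using b by (intro real_le_rsqrt) (simp add: power2_eq_square)
  define lam where "lam = 2 * s"
  define v where "v = b1 / lam"
  have v0: "0 \<le> v" using b s0 by (simp add: v_def lam_def)
  have lamv: "lam * v = b1" using s0 by (simp add: v_def lam_def)
  have b0v: "b0 * (1 + 2 * v) \<le> lam"
  proof -
    have "b0 * (1 + 2 * v) = b0 + b0 * b1 / s" using s0 by (simp add: v_def lam_def field_simps)
    also have "b0 * b1 / s = s" using s0 ss by (simp add: field_simps)
    finally show ?thesis using b0s by (simp add: lam_def)
  qed
  define E where "E y i = \<bar>(2::real)^(y i) - 2^(y (i - 1))\<bar>" for y :: "nat \<Rightarrow> nat" and i
  define A where "A y = (\<Sum>i\<in>{1..n}. (2::real)^(y i))" for y :: "nat \<Rightarrow> nat"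
  define B where "B y = (\<Sum>i\<in>{2..n}. E y i)" for y
  define F where "F y = A y + v * B y" for y
  have fin: "finite {1..n}" "{1..n} \<noteq> {}" using n by auto
  have A0: "0 \<le> A y" for y unfolding A_def by (intro sum_nonneg) simp
  have B0: "0 \<le> B y" for y unfolding B_def E_def by (intro sum_nonneg) simp
  have lam0: "0 \<le> lam" using s0 by (simp add: lam_def)
  have drift: "(\<Sum>j\<in>{1..n}. rate b0 b1 n x j * (F (x(j:=Suc(x j))) - F x)) \<le> lam * F x" for x
  proof -
    define L where "L j = (if j \<noteq> 1 \<and> x j < x (j - 1) then E x j else 0)" for j
    define R where "R j = (if j \<noteq> n \<and> x j < x (Suc j) then E x (Suc j) else 0)" for j
    have L0: "0 \<le> L j" for j by (simp add: L_def E_def)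
    have R0: "0 \<le> R j" for j by (simp add: R_def E_def)
    have each: "rate b0 b1 n x j * (F (x(j:=Suc(x j))) - F x) \<le> b0 * (1 + 2 * v) * 2^(x j) + b1 * (L j + R j)"
      if j: "j \<in> {1..n}" for j
    proof -
      define x' where "x' = x(j:=Suc(x j))"
      define a where "a = (2::real)^(x j)"
      have a0: "0 < a" by (simp add: a_def)
      have dA: "A x' = A x + a"
      proof -
        have "A x' = A x + (2^(Suc (x j)) - 2^(x j))"
          unfolding A_def x'_def by (rule sum_upd[OF fin(1) j])
        then show ?thesis by (simp add: a_def)
      qed
      define T where "T = {2..n} \<inter> {j, Suc j}"
      define dd where "dd i = E x' i - E x i" for i
      have finT: "finite T" by (simp add: T_def)
      have dB: "B x' - B x = (\<Sum>i\<in>T. dd i)"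
      proof -
        have "B x' - B x = (\<Sum>i\<in>{2..n}. dd i)" unfolding B_def dd_def by (simp add: sum_subtractf)
        also have "\<dots> = (\<Sum>i\<in>T. dd i)"
        proof (rule sum.mono_neutral_right)
          show "\<forall>i\<in>{2..n} - T. dd i = 0"
          proof
            fix i assume "i \<in> {2..n} - T"
            then have "i \<noteq> j" "i - 1 \<noteq> j" "i \<ge> 2" by (auto simp: T_def)
            then show "dd i = 0" by (simp add: dd_def E_def x'_def)
          qed
        qed (auto simp: T_def)
        finally show ?thesis .
      qed
      have ddj: "dd j = \<bar>2 * a - 2^(x (j-1))\<bar> - \<bar>a - 2^(x (j-1))\<bar>" if "j \<ge> 2"
        using that by (simp add: dd_def E_def x'_def a_def)
      have ddSj: "dd (Suc j) = \<bar>2 * a - 2^(x (Suc j))\<bar> - \<bar>a - 2^(x (Suc j))\<bar>"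
        by (simp add: dd_def E_def x'_def a_def abs_minus_commute)
      have ddle: "dd i \<le> a" if "i \<in> T" for i
      proof -
        have "i = j \<and> j \<ge> 2 \<or> i = Suc j" using that by (auto simp: T_def)
        then show ?thesis
          using ddj ddSj pw_diff(1)[of "x j" "x (j-1)"] pw_diff(1)[of "x j" "x (Suc j)"]
          unfolding a_def by auto
      qed
      have cT: "card T \<le> 2"
      proof -
        have "card T \<le> card {j, Suc j}" by (rule card_mono) (auto simp: T_def)
        also have "\<dots> \<le> 2" by (simp add: card_insert_le_m1)
        finally show ?thesis .
      qed
      have sumT: "(\<Sum>i\<in>T. dd i) \<le> 2 * a"
      proof -
        have "(\<Sum>i\<in>T. dd i) \<le> of_nat (card T) * a" using ddle by (rule sum_bounded_above)
        also have "\<dots> \<le> 2 * a" using cT a0 by (intro mult_right_mono) auto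
        finally show ?thesis .
      qed
      have sumT0: "(\<Sum>i\<in>T. dd i) \<le> 0" if "k \<in> T" "dd k = - a" for k
      proof -
        have "card (T - {k}) \<le> 1"
        proof -
          have "T - {k} \<subseteq> {j, Suc j} - {k}" by (auto simp: T_def)
          then have "card (T - {k}) \<le> card ({j, Suc j} - {k})" by (intro card_mono) auto
          also have "\<dots> \<le> 1" using that(1) by (auto simp: T_def card_Diff_singleton_if)
          finally show ?thesis .
        qed
        have "(\<Sum>i\<in>T. dd i) = dd k + (\<Sum>i\<in>T - {k}. dd i)" using finT that(1) by (rule sum.remove)
        also have "(\<Sum>i\<in>T - {k}. dd i) \<le> of_nat (card (T - {k})) * a"
          using ddle by (intro sum_bounded_above) auto
        also have "\<dots> \<le> 1 * a" using \<open>card (T - {k}) \<le> 1\<close> a0 by (intro mult_right_mono) auto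
        finally show ?thesis using that(2) by simp
      qed
      have dF: "F x' - F x = a + v * (\<Sum>i\<in>T. dd i)"
        unfolding F_def dA using dB by (simp add: algebra_simps)
      show ?thesis
      proof (cases "V n x j = 0")
        case True
        then have r: "rate b0 b1 n x j = b0" by (simp add: rate_def)
        have "F x' - F x \<le> a + v * (2 * a)" unfolding dF using sumT v0 by (simp add: mult_left_mono)
        then have "rate b0 b1 n x j * (F x' - F x) \<le> b0 * (1 + 2 * v) * a"
          using r b mult_left_mono[of "F x' - F x" "a + v * (2 * a)" b0] by (simp add: algebra_simps)
        also have "\<dots> \<le> b0 * (1 + 2 * v) * 2^(x j) + b1 * (L j + R j)"
          using L0 R0 b by (simp add: a_def)
        finally show ?thesis by (simp add: x'_def)
      next
        case False
        then have r: "rate b0 b1 n x j = b1" by (simp add: rate_def)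
        from False have lr: "(j \<noteq> 1 \<and> x j < x (j - 1)) \<or> (j \<noteq> n \<and> x j < x (Suc j))"
          by (auto simp: V_def split: if_splits)
        have "F x' - F x \<le> a \<and> a \<le> L j + R j"
        proof (cases "j \<noteq> 1 \<and> x j < x (j - 1)")
          case True
          have j2: "j \<ge> 2" using True j by auto
          have "dd j = - a" using ddj[OF j2] pw_diff(2)[of "x j" "x (j-1)"] True by (simp add: a_def)
          moreover have "j \<in> T" using j2 j by (auto simp: T_def)
          ultimately have "(\<Sum>i\<in>T. dd i) \<le> 0" by (intro sumT0)
          then have "F x' - F x \<le> a" unfolding dF using v0 by (simp add: mult_nonneg_nonpos)
          moreover have "a \<le> L j" using True pw_diff(3)[of "x j" "x (j-1)"]
            by (simp add: L_def E_def a_def abs_minus_commute)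
          ultimately show ?thesis using R0[of j] by linarith
        next
          case False
          then have rt: "j \<noteq> n \<and> x j < x (Suc j)" using lr by blast
          have "dd (Suc j) = - a" using ddSj pw_diff(2)[of "x j" "x (Suc j)"] rt by (simp add: a_def)
          moreover have "Suc j \<in> T" using rt j by (auto simp: T_def)
          ultimately have "(\<Sum>i\<in>T. dd i) \<le> 0" by (intro sumT0)
          then have "F x' - F x \<le> a" unfolding dF using v0 by (simp add: mult_nonneg_nonpos)
          moreover have "a \<le> R j" using rt pw_diff(3)[of "x j" "x (Suc j)"]
            by (simp add: R_def E_def a_def)
          ultimately show ?thesis using L0[of j] by linarith
        qed
        then have "F x' - F x \<le> L j + R j" by linarith
        then have "b1 * (F x' - F x) \<le> b1 * (L j + R j)"
          by (rule mult_left_mono) (use b in linarith)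
        then have "rate b0 b1 n x j * (F x' - F x) \<le> b1 * (L j + R j)" by (simp only: r)
        also have "\<dots> \<le> b0 * (1 + 2 * v) * 2^(x j) + b1 * (L j + R j)"
          using b v0 by simp
        finally show ?thesis by (simp add: x'_def)
      qed
    qed
    have LR: "(\<Sum>j\<in>{1..n}. L j) + (\<Sum>j\<in>{1..n}. R j) \<le> B x"
    proof -
      have sL: "(\<Sum>j\<in>{1..n}. L j) = (\<Sum>i\<in>{2..n}. L i)"
      proof (rule sum.mono_neutral_right)
        show "\<forall>i\<in>{1..n} - {2..n}. L i = 0"
        proof
          fix i assume "i \<in> {1..n} - {2..n}"
          then have "i = 1" by auto
          then show "L i = 0" by (simp add: L_def)
        qed
      qed auto
      have sR1: "(\<Sum>j\<in>{1..n}. R j) = (\<Sum>j\<in>{1..n-1}. R j)"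
      proof (rule sum.mono_neutral_right)
        show "\<forall>i\<in>{1..n} - {1..n-1}. R i = 0"
        proof
          fix i assume "i \<in> {1..n} - {1..n-1}"
          then have "i = n" by auto
          then show "R i = 0" by (simp add: R_def)
        qed
      qed auto
      have sR2: "(\<Sum>i\<in>{2..n}. R (i - 1)) = (\<Sum>j\<in>{1..n-1}. R j)"
        by (rule sum.reindex_bij_witness[where i="\<lambda>j. j + 1" and j="\<lambda>i. i - 1"]) auto
      have sR: "(\<Sum>j\<in>{1..n}. R j) = (\<Sum>i\<in>{2..n}. R (i - 1))"
        using sR1 sR2 by simp
      have "(\<Sum>i\<in>{2..n}. L i) + (\<Sum>i\<in>{2..n}. R (i - 1)) = (\<Sum>i\<in>{2..n}. L i + R (i - 1))"
        by (simp add: sum.distrib)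
      also have "\<dots> \<le> (\<Sum>i\<in>{2..n}. E x i)"
      proof (rule sum_mono)
        fix i assume i: "i \<in> {2..n}"
        then have si: "Suc (i - 1) = i" "Suc (i - Suc 0) = i" by auto
        have E0: "0 \<le> E x i" by (simp add: E_def)
        show "L i + R (i - 1) \<le> E x i"
        proof (cases "x i < x (i - 1)")
          case True
          then have "R (i - 1) = 0" by (simp add: R_def si)
          then show ?thesis using E0 by (simp add: L_def)
        next
          case False
          then have "L i = 0" by (simp add: L_def)
          moreover have "R (i - 1) \<le> E x i" using E0 by (simp add: R_def si)
          ultimately show ?thesis by simp
        qed
      qed
      finally show ?thesis using sL sR by (simp add: B_def)
    qed
    have "(\<Sum>j\<in>{1..n}. rate b0 b1 n x j * (F (x(j:=Suc(x j))) - F x))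
        \<le> (\<Sum>j\<in>{1..n}. b0 * (1 + 2 * v) * 2^(x j) + b1 * (L j + R j))"
      by (rule sum_mono) (rule each)
    also have "\<dots> = b0 * (1 + 2 * v) * A x + b1 * ((\<Sum>j\<in>{1..n}. L j) + (\<Sum>j\<in>{1..n}. R j))"
    proof -
      have "(\<Sum>j\<in>{1..n}. b0 * (1 + 2 * v) * 2^(x j) + b1 * (L j + R j))
          = (\<Sum>j\<in>{1..n}. b0 * (1 + 2 * v) * 2^(x j)) + (\<Sum>j\<in>{1..n}. b1 * (L j + R j))"
        by (rule sum.distrib)
      also have "(\<Sum>j\<in>{1..n}. b0 * (1 + 2 * v) * 2^(x j)) = b0 * (1 + 2 * v) * A x"
        unfolding A_def by (rule sum_distrib_left[symmetric])
      also have "(\<Sum>j\<in>{1..n}. b1 * (L j + R j)) = b1 * (\<Sum>j\<in>{1..n}. L j + R j)"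
        by (rule sum_distrib_left[symmetric])
      also have "(\<Sum>j\<in>{1..n}. L j + R j) = (\<Sum>j\<in>{1..n}. L j) + (\<Sum>j\<in>{1..n}. R j)"
        by (rule sum.distrib)
      finally show ?thesis .
    qed
    also have "\<dots> \<le> lam * A x + b1 * B x"
    proof (rule add_mono)
      show "b0 * (1 + 2 * v) * A x \<le> lam * A x" using b0v A0[of x] by (rule mult_right_mono)
      show "b1 * ((\<Sum>j\<in>{1..n}. L j) + (\<Sum>j\<in>{1..n}. R j)) \<le> b1 * B x"
        using LR by (rule mult_left_mono) (use b in linarith)
    qed
    also have "\<dots> = lam * F x" unfolding F_def lamv[symmetric] by (simp only: distrib_left mult.assoc)
    finally show ?thesis .
  qed
  have Fge: "exp (ln 2 * real (x n)) \<le> F x" for x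
  proof -
    have "exp (ln 2 * real (x n)) = (2::real) ^ (x n)"
    proof -
      have "exp (ln 2 * real (x n)) = exp (real (x n) * ln 2)" by (simp only: mult.commute)
      also have "\<dots> = exp (ln 2) ^ (x n)" by (rule exp_of_nat_mult)
      finally show ?thesis by simp
    qed
    also have "\<dots> \<le> A x" unfolding A_def using fin n by (intro member_le_sum) auto
    also have "\<dots> \<le> F x" unfolding F_def using v0 B0[of x] by simp
    finally show ?thesis .
  qed
  have Fnn: "0 \<le> F y" for y unfolding F_def using A0 B0 v0 by simp
  have F0: "F (\<lambda>_. 0) = real n" by (simp add: F_def A_def B_def E_def)
  define d where "d = 4 * sqrt 2 * sqrt (b1 * b0) + e"
  define al where "al = ln 2 * d - lam"
  have al: "al > 0"
  proof -
    have sq: "sqrt (b1 * b0) = s" by (simp add: s_def mult.commute)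
    have "1 \<le> sqrt (2::real)" by simp
    then have "4 * s \<le> 4 * sqrt 2 * s" using s0 by simp
    then have "(1/2) * (4 * s) \<le> ln 2 * (4 * sqrt 2 * s)"
      by (rule mult_mono[OF ln2_ge]) (use s0 in auto)
    then have "2 * s \<le> ln 2 * (4 * sqrt 2 * s)" by simp
    moreover have "0 < ln 2 * e" using e by simp
    moreover have "ln 2 * (4 * sqrt 2 * s + e) = ln 2 * (4 * sqrt 2 * s) + ln 2 * e"
      by (rule distrib_left)
    ultimately show ?thesis unfolding al_def d_def lam_def sq by linarith
  qed
  have "tail_prob b0 b1 n t d \<le> real n * exp (- al * t)" if t: "0 \<le> t" for t
  proof -
    have "tail_prob b0 b1 n t d \<le> F (\<lambda>_. 0) * exp ((lam - ln 2 * d) * t)"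
      by (rule generic_tail[OF b n Fnn drift lam0 Fge _ t]) simp
    also have "(lam - ln 2 * d) = - al" by (simp add: al_def)
    finally show ?thesis by (simp add: F0)
  qed
  then show ?thesis using al unfolding d_def by blast
qed


theorem mainTheorem9:
  fixes b0 b1 \<epsilon> :: real and n :: nat
  assumes "0 < b0" and "b0 < b1" and "2 \<le> n" and "0 < \<epsilon>"
  shows "(\<exists>C \<alpha>. C > 0 \<and> \<alpha> > 0 \<and> (\<forall>t\<ge>0.
            tail_prob b0 b1 n t (real n * b0 + \<epsilon>) \<le> C * exp (- \<alpha> * t) \<and>
            tail_prob b0 b1 n t ((real (n - 1) * b1 + b0) / real n + \<epsilon>) \<le> C * exp (- \<alpha> * t) \<and>
            tail_prob b0 b1 n t (4 * sqrt 2 * sqrt (b1 * b0) + \<epsilon>) \<le> C * exp (- \<alpha> * t)))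
         \<and> d_tilde b0 b1 n \<le> min (real n * b0)
              (min ((real (n - 1) * b1 + b0) / real n) (4 * sqrt 2 * sqrt (b1 * b0)))"
proof -
  have b: "0 < b0" "b0 < b1" using assms(1,2) by auto
  have n1: "1 \<le> n" using assms(3) by simp
  have nge: "1 \<le> real n" using n1 by simp
  define d1 where "d1 = real n * b0"
  define d2 where "d2 = (real (n - 1) * b1 + b0) / real n"
  define d3 where "d3 = 4 * sqrt 2 * sqrt (b1 * b0)"
  have d1p: "0 \<le> d1" using b by (simp add: d1_def)
  have d2p: "0 \<le> d2" using b by (simp add: d2_def)
  have d3p: "0 \<le> d3" using b unfolding d3_def by (intro mult_nonneg_nonneg) auto
  have tails: "\<exists>C \<alpha>. C > 0 \<and> \<alpha> > 0 \<and> (\<forall>t\<ge>0.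
            tail_prob b0 b1 n t (d1 + e) \<le> C * exp (- \<alpha> * t) \<and>
            tail_prob b0 b1 n t (d2 + e) \<le> C * exp (- \<alpha> * t) \<and>
            tail_prob b0 b1 n t (d3 + e) \<le> C * exp (- \<alpha> * t))" if e: "0 < e" for e
  proof -
    obtain a1 where a1: "a1 > 0" "\<forall>t\<ge>0. tail_prob b0 b1 n t (d1 + e) \<le> 1 * exp (- a1 * t)"
      using tail1[OF b n1 e] unfolding d1_def by blast
    obtain a2 where a2: "a2 > 0" "\<forall>t\<ge>0. tail_prob b0 b1 n t (d2 + e) \<le> real n * exp (- a2 * t)"
      using tail2[OF b n1 e] unfolding d2_def by blast
    obtain a3 where a3: "a3 > 0" "\<forall>t\<ge>0. tail_prob b0 b1 n t (d3 + e) \<le> real n * exp (- a3 * t)"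
      using tail3[OF b n1 e] unfolding d3_def by blast
    define al where "al = min a1 (min a2 a3)"
    have al: "al > 0" using a1 a2 a3 by (simp add: al_def)
    have ex: "exp (- a * t) \<le> exp (- al * t)" if "al \<le> a" "0 \<le> t" for a t
      using that by (simp add: mult_right_mono)
    show ?thesis
    proof (intro exI conjI allI impI)
      show "real n > 0" using n1 by simp
      show "al > 0" by (rule al)
      fix t :: real assume t: "0 \<le> t"
      have "tail_prob b0 b1 n t (d1 + e) \<le> 1 * exp (- a1 * t)" using a1 t by blast
      also have "\<dots> \<le> real n * exp (- al * t)"
        using nge ex[of a1 t] t by (intro mult_mono) (auto simp: al_def)
      finally show "tail_prob b0 b1 n t (d1 + e) \<le> real n * exp (- al * t)" .
      have "tail_prob b0 b1 n t (d2 + e) \<le> real n * exp (- a2 * t)" using a2 t by blast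
      also have "\<dots> \<le> real n * exp (- al * t)"
        using ex[of a2 t] t by (intro mult_left_mono) (auto simp: al_def)
      finally show "tail_prob b0 b1 n t (d2 + e) \<le> real n * exp (- al * t)" .
      have "tail_prob b0 b1 n t (d3 + e) \<le> real n * exp (- a3 * t)" using a3 t by blast
      also have "\<dots> \<le> real n * exp (- al * t)"
        using ex[of a3 t] t by (intro mult_left_mono) (auto simp: al_def)
      finally show "tail_prob b0 b1 n t (d3 + e) \<le> real n * exp (- al * t)" .
    qed
  qed
  define S where "S = {d. d > 0 \<and> (\<exists>C \<alpha>. C > 0 \<and> \<alpha> > 0 \<and>
       (\<forall>t\<ge>0. tail_prob b0 b1 n t d \<le> C * exp (- \<alpha> * t)))}"
  have dt: "d_tilde b0 b1 n = Inf S" by (simp add: d_tilde_def S_def)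
  have bdd: "bdd_below S" unfolding S_def by (rule bdd_belowI[of _ 0]) auto
  have low: "Inf S \<le> d" if "d \<in> S" for d using that bdd by (rule cInf_lower)
  have k1: "Inf S \<le> d1" and k2: "Inf S \<le> d2" and k3: "Inf S \<le> d3"
  proof -
    have mem: "di + e \<in> S" if "0 \<le> di" "0 < e"
      "\<exists>C \<alpha>. C > 0 \<and> \<alpha> > 0 \<and> (\<forall>t\<ge>0. tail_prob b0 b1 n t (di + e) \<le> C * exp (- \<alpha> * t))"
      for di e using that unfolding S_def by auto
    show "Inf S \<le> d1"
    proof (rule field_le_epsilon)
      fix e :: real assume e: "0 < e"
      from tails[OF e] obtain C \<alpha> where "C > 0" "\<alpha> > 0"
        "\<forall>t\<ge>0. tail_prob b0 b1 n t (d1 + e) \<le> C * exp (- \<alpha> * t)" by blast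
      then have "d1 + e \<in> S" using mem[OF d1p e] by blast
      then show "Inf S \<le> d1 + e" by (rule low)
    qed
    show "Inf S \<le> d2"
    proof (rule field_le_epsilon)
      fix e :: real assume e: "0 < e"
      from tails[OF e] obtain C \<alpha> where "C > 0" "\<alpha> > 0"
        "\<forall>t\<ge>0. tail_prob b0 b1 n t (d2 + e) \<le> C * exp (- \<alpha> * t)" by blast
      then have "d2 + e \<in> S" using mem[OF d2p e] by blast
      then show "Inf S \<le> d2 + e" by (rule low)
    qed
    show "Inf S \<le> d3"
    proof (rule field_le_epsilon)
      fix e :: real assume e: "0 < e"
      from tails[OF e] obtain C \<alpha> where "C > 0" "\<alpha> > 0"
        "\<forall>t\<ge>0. tail_prob b0 b1 n t (d3 + e) \<le> C * exp (- \<alpha> * t)" by blast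
      then have "d3 + e \<in> S" using mem[OF d3p e] by blast
      then show "Inf S \<le> d3 + e" by (rule low)
    qed
  qed
  have part2: "d_tilde b0 b1 n \<le> min d1 (min d2 d3)" using k1 k2 k3 dt by simp
  show ?thesis
    using tails[OF assms(4)] part2 unfolding d1_def d2_def d3_def by blast
qed

end
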